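(* Let $\varphi\colon\mathcal{M}\to\mathcal{X}$ be a smooth lift of the form $\varphi(\lambda,Y_1,\dots,Y_d)=\sum_{i=1}^r\lambda_i\,(Y_1)_{:,i}\otimes\cdots\otimes(Y_d)_{:,i}$, where $\mathcal{M}$ is a smooth embedded submanifold of $\mathbb{R}^r\times\mathbb{R}^{n_1\times r}\times\cdots\times\mathbb{R}^{n_d\times r}$. Let $(\lambda,Y_1,\dots,Y_d)\in\mathcal{M}$ and $X=\varphi(\lambda,Y_1,\dots,Y_d)$, and suppose $\mathrm{col}(Y_1)^\perp\otimes\cdots\otimes\mathrm{col}(Y_d)^\perp\not\subseteq(\mathrm{T}_X\mathcal{X})^*$. If $d\ge3$, then $\varphi$ does not satisfy "2 $\Rightarrow$ 1" at $(\lambda,Y_1,\dots,Y_d)$. If $d=2$ and $\lambda=0$, then $\varphi$ does not satisfy "2 $\Rightarrow$ 1" at $(0,Y_1,Y_2)$.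
   Context: $(Y)_{:,i}$ is the $i$-th column of $Y$; $\otimes$ is the tensor (outer) product, with values in $\mathbb{R}^{n_1\times\cdots\times n_d}$ equipped with the standard inner product; $\mathrm{col}(Y_j)^\perp\subseteq\mathbb{R}^{n_j}$ is the orthogonal complement of the column space, and $\mathrm{col}(Y_1)^\perp\otimes\cdots\otimes\mathrm{col}(Y_d)^\perp$ is the linear span of the tensors $u_1\otimes\cdots\otimes u_d$ with $u_j\in\mathrm{col}(Y_j)^\perp$. $\mathcal{X}=\varphi(\mathcal{M})$. Tangent cone $\mathrm{T}_X\mathcal{X}=\{\lim(X_i-X)/\tau_i: X_i\in\mathcal{X},\tau_i>0,\tau_i\to0\}$; $K^*=\{U:\langle U,V\rangle\ge0\ \forall V\in K\}$. For $g=f\circ\varphi$, $y$ is 2-critical if $(g\circ c)'(0)=0$ and $(g\circ c)''(0)\ge0$ for all smooth curves $c$ in $\mathcal{M}$ with $c(0)=y$. "2 $\Rightarrow$ 1" at $y$: for every twice differentiable $f$ on $\mathbb{R}^{n_1\times\cdots\times n_d}$, if $y$ is 2-critical for $f\circ\varphi$ then $\varphi(y)$ is stationary, i.e., $\nabla f(\varphi(y))\in(\mathrm{T}_{\varphi(y)}\mathcal{X})^*$. *)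

theory Defs
  imports "HOL-Analysis.Analysis"
begin

text \<open>Since the number of factors d, the sizes n_1..n_d and the rank r vary inside the statement,
  all Euclidean spaces involved (R^r, R^(n_j x r), R^(n_1 x ... x n_d), R^k) are realised as
  coordinate subspaces of the inner product space of finitely supported real functions on a
  fixed index type, with the standard (l2) inner product.\<close>

typedef 'a fsupp = "{f :: 'a \<Rightarrow> real. finite {x. f x \<noteq> 0}}"
  morphisms fs Abs_fsupp
  by (rule exI[of _ "\<lambda>_. 0"]) simp

setup_lifting type_definition_fsupp

definition supp_fs :: "'a fsupp \<Rightarrow> 'a set" where
  "supp_fs u = {x. fs u x \<noteq> 0}"

lemma finite_supp_fs [simp]: "finite (supp_fs u)"
  using fs[of u] by (simp add: supp_fs_def)

lemma fs_eqI: "(\<And>x. fs u x = fs v x) \<Longrightarrow> u = v"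
  by (metis fs_inverse ext)

instantiation fsupp :: (type) real_vector
begin
lift_definition zero_fsupp :: "'a fsupp" is "\<lambda>_. 0" by simp
lift_definition plus_fsupp :: "'a fsupp \<Rightarrow> 'a fsupp \<Rightarrow> 'a fsupp" is "\<lambda>f g x. f x + g x"
proof -
  fix f g :: "'a \<Rightarrow> real" assume "finite {x. f x \<noteq> 0}" "finite {x. g x \<noteq> 0}"
  then have "finite ({x. f x \<noteq> 0} \<union> {x. g x \<noteq> 0})" by simp
  then show "finite {x. f x + g x \<noteq> 0}" by (rule rev_finite_subset) auto
qed
lift_definition uminus_fsupp :: "'a fsupp \<Rightarrow> 'a fsupp" is "\<lambda>f x. - f x" by simp
lift_definition minus_fsupp :: "'a fsupp \<Rightarrow> 'a fsupp \<Rightarrow> 'a fsupp" is "\<lambda>f g x. f x - g x"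
proof -
  fix f g :: "'a \<Rightarrow> real" assume "finite {x. f x \<noteq> 0}" "finite {x. g x \<noteq> 0}"
  then have "finite ({x. f x \<noteq> 0} \<union> {x. g x \<noteq> 0})" by simp
  then show "finite {x. f x - g x \<noteq> 0}" by (rule rev_finite_subset) auto
qed
lift_definition scaleR_fsupp :: "real \<Rightarrow> 'a fsupp \<Rightarrow> 'a fsupp" is "\<lambda>c f x. c * f x"
proof -
  fix c and f :: "'a \<Rightarrow> real" assume "finite {x. f x \<noteq> 0}"
  then show "finite {x. c * f x \<noteq> 0}" by (rule rev_finite_subset) auto
qed
instance
  by standard (transfer; auto simp: algebra_simps)+
end

instantiation fsupp :: (type) real_inner
begin
definition inner_fsupp :: "'a fsupp \<Rightarrow> 'a fsupp \<Rightarrow> real" where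
  "inner_fsupp u v = (\<Sum>x\<in>supp_fs u. fs u x * fs v x)"
definition norm_fsupp :: "'a fsupp \<Rightarrow> real" where
  "norm_fsupp u = sqrt (inner u u)"
definition dist_fsupp :: "'a fsupp \<Rightarrow> 'a fsupp \<Rightarrow> real" where
  "dist_fsupp u v = norm (u - v)"
definition sgn_fsupp :: "'a fsupp \<Rightarrow> 'a fsupp" where
  "sgn_fsupp u = u /\<^sub>R norm u"
definition uniformity_fsupp :: "('a fsupp \<times> 'a fsupp) filter" where
  "uniformity_fsupp = (INF e\<in>{0<..}. principal {(x, y). dist x y < e})"
definition open_fsupp :: "'a fsupp set \<Rightarrow> bool" where
  "open_fsupp U = (\<forall>x\<in>U. \<forall>\<^sub>F (x', y) in uniformity. x' = x \<longrightarrow> y \<in> U)"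

lemma inner_fsupp_sup:
  assumes "finite A" "supp_fs u \<subseteq> A"
  shows "inner u v = (\<Sum>x\<in>A. fs u x * fs v x)"
  unfolding inner_fsupp_def
  by (rule sum.mono_neutral_left) (use assms in \<open>auto simp: supp_fs_def\<close>)

instance
proof
  fix x y z :: "'a fsupp" and r :: real
  let ?A = "supp_fs x \<union> supp_fs y \<union> supp_fs z"
  have fA: "finite ?A" by simp
  have sx: "supp_fs x \<subseteq> ?A" and sy: "supp_fs y \<subseteq> ?A" and sz: "supp_fs z \<subseteq> ?A" by auto
  show "inner x y = inner y x"
    using inner_fsupp_sup[OF fA sx, of y] inner_fsupp_sup[OF fA sy, of x]
    by (simp add: mult.commute)
  have sxy: "supp_fs (x + y) \<subseteq> ?A" by (auto simp: supp_fs_def plus_fsupp.rep_eq)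
  show "inner (x + y) z = inner x z + inner y z"
    using inner_fsupp_sup[OF fA sxy, of z] inner_fsupp_sup[OF fA sx, of z] inner_fsupp_sup[OF fA sy, of z]
    by (simp add: plus_fsupp.rep_eq distrib_right sum.distrib)
  have srx: "supp_fs (r *\<^sub>R x) \<subseteq> ?A" by (auto simp: supp_fs_def scaleR_fsupp.rep_eq)
  show "inner (r *\<^sub>R x) y = r * inner x y"
    using inner_fsupp_sup[OF fA srx, of y] inner_fsupp_sup[OF fA sx, of y]
    by (simp add: scaleR_fsupp.rep_eq sum_distrib_left mult.assoc)
  show "0 \<le> inner x x" unfolding inner_fsupp_def by (intro sum_nonneg) simp
  show "inner x x = 0 \<longleftrightarrow> x = 0"
  proof
    assume h: "inner x x = 0"
    have "\<forall>i\<in>supp_fs x. fs x i * fs x i = 0"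
      using h unfolding inner_fsupp_def by (subst (asm) sum_nonneg_eq_0_iff) auto
    then have "supp_fs x = {}" by (auto simp: supp_fs_def)
    then show "x = 0" by (intro fs_eqI) (auto simp: supp_fs_def zero_fsupp.rep_eq)
  next
    assume "x = 0" then show "inner x x = 0"
      by (simp add: inner_fsupp_def supp_fs_def zero_fsupp.rep_eq)
  qed
  show "norm x = sqrt (inner x x)" by (simp add: norm_fsupp_def)
qed (simp_all add: dist_fsupp_def sgn_fsupp_def uniformity_fsupp_def open_fsupp_def)
end


definition Rn :: "nat \<Rightarrow> nat fsupp set" where
  "Rn m = {u. supp_fs u \<subseteq> {..<m}}"

text \<open>A point (lambda, Y_1, ..., Y_d) of R^r x R^(n_1 x r) x ... x R^(n_d x r) is a pair (l, Y) with
  fs l i = lambda_(i+1) and fs Y (j, a, i) = (Y_(j+1))_(a+1, i+1) (0-based indices).\<close>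
type_synonym param = "nat fsupp \<times> (nat \<times> nat \<times> nat) fsupp"
type_synonym tensor = "nat list fsupp"

definition param_space :: "nat \<Rightarrow> nat \<Rightarrow> (nat \<Rightarrow> nat) \<Rightarrow> param set" where
  "param_space d r n = {(l, Y). supp_fs l \<subseteq> {..<r} \<and>
      supp_fs Y \<subseteq> {(j, a, i). j < d \<and> a < n j \<and> i < r}}"

definition multi_idx :: "nat \<Rightarrow> (nat \<Rightarrow> nat) \<Rightarrow> nat list set" where
  "multi_idx d n = {is. length is = d \<and> (\<forall>j<d. is ! j < n j)}"

lemma finite_multi_idx [simp]: "finite (multi_idx d n)"
proof -
  have "multi_idx d n \<subseteq> {xs. set xs \<subseteq> {..<(\<Sum>j<d. n j)} \<and> length xs = d}"
  proof
    fix xs assume xs: "xs \<in> multi_idx d n"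
    have "set xs \<subseteq> {..<(\<Sum>j<d. n j)}"
    proof
      fix x assume "x \<in> set xs"
      then obtain j where j: "j < d" "x = xs ! j" using xs by (auto simp: multi_idx_def in_set_conv_nth)
      then have "x < n j" using xs by (auto simp: multi_idx_def)
      also have "n j \<le> (\<Sum>j<d. n j)" using j by (intro member_le_sum) auto
      finally show "x \<in> {..<(\<Sum>j<d. n j)}" by simp
    qed
    then show "xs \<in> {xs. set xs \<subseteq> {..<(\<Sum>j<d. n j)} \<and> length xs = d}"
      using xs by (simp add: multi_idx_def)
  qed
  moreover have "finite {xs. set xs \<subseteq> {..<(\<Sum>j<d. n j)} \<and> length xs = d}"
    by (rule finite_lists_length_eq) simp
  ultimately show ?thesis by (rule finite_subset)
qed

definition tensor_space :: "nat \<Rightarrow> (nat \<Rightarrow> nat) \<Rightarrow> tensor set" where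
  "tensor_space d n = {X. supp_fs X \<subseteq> multi_idx d n}"

lift_definition mk_tensor :: "nat \<Rightarrow> (nat \<Rightarrow> nat) \<Rightarrow> (nat list \<Rightarrow> real) \<Rightarrow> tensor"
  is "\<lambda>d n F is. if is \<in> multi_idx d n then F is else 0"
proof -
  fix d n and F :: "nat list \<Rightarrow> real"
  show "finite {is. (if is \<in> multi_idx d n then F is else 0) \<noteq> 0}"
    by (rule finite_subset[OF _ finite_multi_idx[of d n]]) auto
qed

definition lift_phi :: "nat \<Rightarrow> nat \<Rightarrow> (nat \<Rightarrow> nat) \<Rightarrow> param \<Rightarrow> tensor" where
  "lift_phi d r n = (\<lambda>(l, Y). mk_tensor d n
      (\<lambda>is. \<Sum>i<r. fs l i * (\<Prod>j<d. fs Y (j, is ! j, i))))"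

definition outer :: "nat \<Rightarrow> (nat \<Rightarrow> nat) \<Rightarrow> (nat \<Rightarrow> nat fsupp) \<Rightarrow> tensor" where
  "outer d n u = mk_tensor d n (\<lambda>is. \<Prod>j<d. fs (u j) (is ! j))"

lift_definition column :: "(nat \<times> nat \<times> nat) fsupp \<Rightarrow> nat \<Rightarrow> nat \<Rightarrow> nat fsupp"
  is "\<lambda>Y j i a. Y (j, a, i)"
proof -
  fix Y :: "nat \<times> nat \<times> nat \<Rightarrow> real" and j i :: nat
  assume "finite {x. Y x \<noteq> 0}"
  then have "finite ((\<lambda>a. (j, a, i)) -` {x. Y x \<noteq> 0})"
    by (rule finite_vimageI) (auto simp: inj_on_def)
  then show "finite {a. Y (j, a, i) \<noteq> 0}" by (simp add: vimage_def)
qed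

definition col_space :: "nat \<Rightarrow> (nat \<times> nat \<times> nat) fsupp \<Rightarrow> nat \<Rightarrow> nat fsupp set" where
  "col_space r Y j = span {column Y j i | i. i < r}"

definition orth_compl :: "'a::real_inner set \<Rightarrow> 'a set \<Rightarrow> 'a set" where
  "orth_compl W S = {u \<in> W. \<forall>s\<in>S. inner u s = 0}"

definition tensor_of_complements ::
    "nat \<Rightarrow> nat \<Rightarrow> (nat \<Rightarrow> nat) \<Rightarrow> (nat \<times> nat \<times> nat) fsupp \<Rightarrow> tensor set" where
  "tensor_of_complements d r n Y =
     span {outer d n u | u. \<forall>j<d. u j \<in> orth_compl (Rn (n j)) (col_space r Y j)}"

definition tangent_cone :: "'a::real_normed_vector set \<Rightarrow> 'a \<Rightarrow> 'a set" where
  "tangent_cone A x = {v. \<exists>xs \<tau>. (\<forall>i. xs i \<in> A \<and> \<tau> i > 0) \<and> \<tau> \<longlonglongrightarrow> 0 \<and>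
       (\<lambda>i. (xs i - x) /\<^sub>R \<tau> i) \<longlonglongrightarrow> v}"

definition dual_cone :: "'a::real_inner set \<Rightarrow> 'a set \<Rightarrow> 'a set" where
  "dual_cone W K = {u \<in> W. \<forall>v\<in>K. inner u v \<ge> 0}"

text \<open>C^infinity on S: all iterated (Frechet) derivatives exist; D vs x is the iterated
  derivative at x applied to the directions in vs.  (On finite-dimensional spaces this is
  equivalent to the usual notion.)\<close>
definition smooth_on :: "'a::real_normed_vector set \<Rightarrow> ('a \<Rightarrow> 'b::real_normed_vector) \<Rightarrow> bool" where
  "smooth_on S f \<longleftrightarrow> (\<exists>D :: 'a list \<Rightarrow> 'a \<Rightarrow> 'b. (\<forall>x\<in>S. D [] x = f x) \<and>
      (\<forall>vs. \<forall>x\<in>S. (D vs has_derivative (\<lambda>v. D (v # vs) x)) (at x within S)))"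

definition twice_differentiable_on :: "'a::real_normed_vector set \<Rightarrow> ('a \<Rightarrow> real) \<Rightarrow> bool" where
  "twice_differentiable_on S f \<longleftrightarrow> (\<exists>f' f''. \<forall>x\<in>S. (f has_derivative f' x) (at x within S) \<and>
      (\<forall>v. ((\<lambda>y. f' y v) has_derivative f'' x v) (at x within S)))"

text \<open>Smooth embedded submanifold of the linear space E (local defining functions h: U -> R^k,
  of constant codimension k, with M \<inter> U = h^-1(0) and Dh(p) of rank k).\<close>
definition embedded_submanifold :: "'a::real_normed_vector set \<Rightarrow> 'a set \<Rightarrow> bool" where
  "embedded_submanifold E M \<longleftrightarrow> M \<subseteq> E \<and> (\<exists>k. \<forall>p\<in>M. \<exists>U (h :: 'a \<Rightarrow> nat fsupp) h'.
      open U \<and> p \<in> U \<and> smooth_on (U \<inter> E) h \<and> (\<forall>y\<in>U \<inter> E. h y \<in> Rn k) \<and>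
      (\<forall>y\<in>U \<inter> E. h y = 0 \<longleftrightarrow> y \<in> M) \<and>
      (h has_derivative h') (at p within U \<inter> E) \<and> h' ` E = Rn k)"

definition smooth_curve_in :: "'a::real_normed_vector set \<Rightarrow> (real \<Rightarrow> 'a) \<Rightarrow> bool" where
  "smooth_curve_in M c \<longleftrightarrow> (\<exists>\<epsilon>>0. smooth_on {-\<epsilon><..<\<epsilon>} c \<and> c ` {-\<epsilon><..<\<epsilon>} \<subseteq> M)"

definition two_critical :: "'a::real_normed_vector set \<Rightarrow> ('a \<Rightarrow> real) \<Rightarrow> 'a \<Rightarrow> bool" where
  "two_critical M g y \<longleftrightarrow> (\<forall>c. smooth_curve_in M c \<and> c 0 = y \<longrightarrow>
      deriv (g \<circ> c) 0 = 0 \<and> deriv (deriv (g \<circ> c)) 0 \<ge> 0)"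

definition stationary_point :: "'a::real_inner set \<Rightarrow> 'a set \<Rightarrow> ('a \<Rightarrow> real) \<Rightarrow> 'a \<Rightarrow> bool" where
  "stationary_point W A f x \<longleftrightarrow> (\<exists>g\<in>W. (f has_derivative inner g) (at x within W) \<and>
      g \<in> dual_cone W (tangent_cone A x))"

definition two_implies_one ::
    "'a::real_normed_vector set \<Rightarrow> ('a \<Rightarrow> 'b::real_inner) \<Rightarrow> 'b set \<Rightarrow> 'a \<Rightarrow> bool" where
  "two_implies_one M \<phi> W y \<longleftrightarrow> (\<forall>f. twice_differentiable_on W f \<longrightarrow>
      two_critical M (f \<circ> \<phi>) y \<longrightarrow> stationary_point W (\<phi> ` M) f (\<phi> y))"

end

theory Submission
  imports Defs
begin


lemma fs_add: "fs (u + v) x = fs u x + fs v x" by (simp add: plus_fsupp.rep_eq)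
lemma fs_scale: "fs (c *\<^sub>R u) x = c * fs u x" by (simp add: scaleR_fsupp.rep_eq)
lemma fs_zero: "fs 0 x = 0" by (simp add: zero_fsupp.rep_eq)
lemma fs_minus: "fs (u - v) x = fs u x - fs v x" by (simp add: minus_fsupp.rep_eq)
lemma fs_uminus: "fs (- u) x = - fs u x" by (simp add: uminus_fsupp.rep_eq)

lemma fs_bound: "\<bar>fs u x\<bar> \<le> norm u"
proof -
  have "(fs u x)\<^sup>2 \<le> inner u u"
  proof (cases "x \<in> supp_fs u")
    case True
    then show ?thesis unfolding inner_fsupp_def
      by (subst sum.remove[OF finite_supp_fs True])
         (auto simp: power2_eq_square intro!: sum_nonneg)
  next
    case False
    then show ?thesis by (simp add: supp_fs_def)
  qed
  then show ?thesis by (simp add: norm_fsupp_def real_le_rsqrt)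
qed

lemma bl_fs_sum:
  assumes "finite A"
  shows "bounded_linear (\<lambda>u. \<Sum>k\<in>A. w k * fs u (\<sigma> k))"
proof (rule bounded_linear_intro[where K="\<Sum>k\<in>A. \<bar>w k\<bar>"])
  fix x y show "(\<Sum>k\<in>A. w k * fs (x + y) (\<sigma> k)) = (\<Sum>k\<in>A. w k * fs x (\<sigma> k)) + (\<Sum>k\<in>A. w k * fs y (\<sigma> k))"
    by (simp add: fs_add distrib_left sum.distrib)
next
  fix r x show "(\<Sum>k\<in>A. w k * fs (r *\<^sub>R x) (\<sigma> k)) = r *\<^sub>R (\<Sum>k\<in>A. w k * fs x (\<sigma> k))"
    by (simp add: fs_scale sum_distrib_left algebra_simps)
next
  fix x
  have "norm (\<Sum>k\<in>A. w k * fs x (\<sigma> k)) \<le> (\<Sum>k\<in>A. \<bar>w k * fs x (\<sigma> k)\<bar>)"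
    using sum_abs by (simp)
  also have "\<dots> \<le> (\<Sum>k\<in>A. \<bar>w k\<bar> * norm x)"
    by (intro sum_mono) (simp add: abs_mult mult_left_mono fs_bound)
  finally show "norm (\<Sum>k\<in>A. w k * fs x (\<sigma> k)) \<le> norm x * (\<Sum>k\<in>A. \<bar>w k\<bar>)"
    by (simp add: sum_distrib_left mult.commute)
qed

definition J :: "real \<Rightarrow> (real \<Rightarrow> real) \<Rightarrow> real \<Rightarrow> real \<Rightarrow> real \<Rightarrow> bool" where
  "J e f x0 x1 x2 \<longleftrightarrow> (\<exists>f' f''. (\<forall>t\<in>{-e<..<e}. (f has_real_derivative f' t) (at t) \<and>
      (f' has_real_derivative f'' t) (at t)) \<and> f 0 = x0 \<and> f' 0 = x1 \<and> f'' 0 = x2)"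

lemma J_mult:
  assumes "J e f a0 a1 a2" "J e g b0 b1 b2"
  shows "J e (\<lambda>t. f t * g t) (a0 * b0) (a1 * b0 + a0 * b1) (a2 * b0 + 2 * a1 * b1 + a0 * b2)"
proof -
  obtain f' f'' where F: "\<forall>t\<in>{-e<..<e}. (f has_real_derivative f' t) (at t) \<and>
      (f' has_real_derivative f'' t) (at t)" "f 0 = a0" "f' 0 = a1" "f'' 0 = a2"
    using assms(1) unfolding J_def by blast
  obtain g' g'' where G: "\<forall>t\<in>{-e<..<e}. (g has_real_derivative g' t) (at t) \<and>
      (g' has_real_derivative g'' t) (at t)" "g 0 = b0" "g' 0 = b1" "g'' 0 = b2"
    using assms(2) unfolding J_def by blast
  have D1: "((\<lambda>t. f t * g t) has_real_derivative f' t * g t + f t * g' t) (at t)"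
    and D2: "((\<lambda>t. f' t * g t + f t * g' t) has_real_derivative f'' t * g t + 2 * f' t * g' t + f t * g'' t) (at t)"
    if t: "t \<in> {-e<..<e}" for t
  proof -
    have f1: "(f has_real_derivative f' t) (at t)" and f2: "(f' has_real_derivative f'' t) (at t)"
      using F(1) t by auto
    have g1: "(g has_real_derivative g' t) (at t)" and g2: "(g' has_real_derivative g'' t) (at t)"
      using G(1) t by auto
    show "((\<lambda>t. f t * g t) has_real_derivative f' t * g t + f t * g' t) (at t)"
      using DERIV_mult[OF f1 g1] by (simp add: algebra_simps)
    show "((\<lambda>t. f' t * g t + f t * g' t) has_real_derivative f'' t * g t + 2 * f' t * g' t + f t * g'' t) (at t)"
      using DERIV_add[OF DERIV_mult[OF f2 g1] DERIV_mult[OF f1 g2]] by (simp add: algebra_simps)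
  qed
  show ?thesis unfolding J_def
    apply (rule exI[of _ "\<lambda>t. f' t * g t + f t * g' t"])
    apply (rule exI[of _ "\<lambda>t. f'' t * g t + 2 * f' t * g' t + f t * g'' t"])
    apply (intro conjI ballI)
    subgoal for t using D1 by blast
    subgoal for t using D2 by blast
    using F(2-4) G(2-4) by simp_all
qed

lemma J_add:
  assumes "J e f a0 a1 a2" "J e g b0 b1 b2"
  shows "J e (\<lambda>t. f t + g t) (a0 + b0) (a1 + b1) (a2 + b2)"
proof -
  obtain f' f'' where F: "\<forall>t\<in>{-e<..<e}. (f has_real_derivative f' t) (at t) \<and>
      (f' has_real_derivative f'' t) (at t)" "f 0 = a0" "f' 0 = a1" "f'' 0 = a2"
    using assms(1) unfolding J_def by blast
  obtain g' g'' where G: "\<forall>t\<in>{-e<..<e}. (g has_real_derivative g' t) (at t) \<and>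
      (g' has_real_derivative g'' t) (at t)" "g 0 = b0" "g' 0 = b1" "g'' 0 = b2"
    using assms(2) unfolding J_def by blast
  have D1: "((\<lambda>t. f t + g t) has_real_derivative f' t + g' t) (at t)"
    and D2: "((\<lambda>t. f' t + g' t) has_real_derivative f'' t + g'' t) (at t)"
    if t: "t \<in> {-e<..<e}" for t
  proof -
    have f1: "(f has_real_derivative f' t) (at t)" and f2: "(f' has_real_derivative f'' t) (at t)"
      using F(1) t by auto
    have g1: "(g has_real_derivative g' t) (at t)" and g2: "(g' has_real_derivative g'' t) (at t)"
      using G(1) t by auto
    show "((\<lambda>t. f t + g t) has_real_derivative f' t + g' t) (at t)"
      by (rule DERIV_add[OF f1 g1])
    show "((\<lambda>t. f' t + g' t) has_real_derivative f'' t + g'' t) (at t)"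
      by (rule DERIV_add[OF f2 g2])
  qed
  show ?thesis unfolding J_def
    apply (rule exI[of _ "\<lambda>t. f' t + g' t"])
    apply (rule exI[of _ "\<lambda>t. f'' t + g'' t"])
    apply (intro conjI ballI)
    subgoal for t using D1 by blast
    subgoal for t using D2 by blast
    using F(2-4) G(2-4) by simp_all
qed

lemma J_zero: "J e (\<lambda>t. 0) 0 0 0"
  unfolding J_def by (intro exI[of _ "\<lambda>t. 0"] exI[of _ "\<lambda>t. 0"]) auto

lemma J_sum:
  assumes "finite A" "\<And>i. i \<in> A \<Longrightarrow> J e (f i) 0 0 0"
  shows "J e (\<lambda>t. \<Sum>i\<in>A. f i t) 0 0 0"
  using assms
proof (induction A rule: finite_induct)
  case empty then show ?case by (simp add: J_zero)
next
  case (insert x F)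
  then show ?case using J_add[of e "f x" 0 0 0 "\<lambda>t. \<Sum>i\<in>F. f i t" 0 0 0] by simp
qed

lemma J_prod:
  fixes d :: nat
  assumes "\<And>j. j < d \<Longrightarrow> \<exists>y1 y2. J e (a j) 0 y1 y2"
  shows "\<exists>x0 x1 x2. J e (\<lambda>t. \<Prod>j<d. a j t) x0 x1 x2 \<and> (d \<ge> 1 \<longrightarrow> x0 = 0) \<and>
     (d \<ge> 2 \<longrightarrow> x1 = 0) \<and> (d \<ge> 3 \<longrightarrow> x2 = 0)"
  using assms
proof (induction d)
  case 0
  have "J e (\<lambda>t. 1) 1 0 0"
    unfolding J_def by (intro exI[of _ "\<lambda>t. 0"] exI[of _ "\<lambda>t. 0"]) auto
  then show ?case by (intro exI[of _ 1] exI[of _ 0]) simp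
next
  case (Suc d)
  have pr: "\<And>j. j < d \<Longrightarrow> \<exists>y1 y2. J e (a j) 0 y1 y2" using Suc.prems by simp
  obtain x0 x1 x2 where X: "J e (\<lambda>t. \<Prod>j<d. a j t) x0 x1 x2" "(d \<ge> 1 \<longrightarrow> x0 = 0)"
     "(d \<ge> 2 \<longrightarrow> x1 = 0)" "(d \<ge> 3 \<longrightarrow> x2 = 0)"
    using Suc.IH[OF pr] by blast
  obtain y1 y2 where Y: "J e (a d) 0 y1 y2" using Suc.prems by blast
  have eq: "(\<lambda>t. (\<Prod>j<d. a j t) * a d t) = (\<lambda>t. \<Prod>j<Suc d. a j t)"
    by (simp add: lessThan_Suc mult.commute)
  have "J e (\<lambda>t. \<Prod>j<Suc d. a j t) (x0 * 0) (x1 * 0 + x0 * y1) (x2 * 0 + 2 * x1 * y1 + x0 * y2)"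
    using J_mult[OF X(1) Y] unfolding eq .
  then have Z: "J e (\<lambda>t. \<Prod>j<Suc d. a j t) 0 (x0 * y1) (2 * x1 * y1 + x0 * y2)"
    by simp
  have c1: "Suc d \<ge> 2 \<longrightarrow> x0 * y1 = 0" using X(2) by simp
  have c2: "Suc d \<ge> 3 \<longrightarrow> 2 * x1 * y1 + x0 * y2 = 0" using X(2,3) by simp
  show ?case
    apply (rule exI[of _ 0], rule exI[of _ "x0*y1"], rule exI[of _ "2 * x1 * y1 + x0 * y2"])
    using Z c1 c2 by simp
qed

lemma J_deriv:
  assumes "J e f 0 0 0" "e > 0"
  shows "deriv f 0 = 0 \<and> deriv (deriv f) 0 = 0"
proof -
  obtain f' f'' where F: "\<forall>t\<in>{-e<..<e}. (f has_real_derivative f' t) (at t) \<and>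
      (f' has_real_derivative f'' t) (at t)" "f' 0 = 0" "f'' 0 = 0"
    using assms(1) unfolding J_def by blast
  have z: "0 \<in> {-e<..<e}" using assms(2) by auto
  have d1: "\<And>t. t \<in> {-e<..<e} \<Longrightarrow> deriv f t = f' t"
    using F(1) DERIV_imp_deriv by blast
  have "(deriv f has_real_derivative f'' 0) (at 0)"
  proof (rule has_field_derivative_transform_within_open[of f' "f'' 0" 0 "{-e<..<e}"])
    show "(f' has_real_derivative f'' 0) (at 0)" using F(1) z by blast
    show "open {-e<..<e}" by simp
    show "0 \<in> {-e<..<e}" by (rule z)
    show "\<And>x. x \<in> {-e<..<e} \<Longrightarrow> f' x = deriv f x" using d1 by simp
  qed
  then have "deriv (deriv f) 0 = f'' 0" by (rule DERIV_imp_deriv)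
  then show ?thesis using d1[OF z] F(2,3) by simp
qed



lemma real_deriv_L:
  fixes L :: "'a::real_normed_vector \<Rightarrow> real"
  assumes g: "(g has_derivative g') (at t)" and L: "bounded_linear L"
  shows "((\<lambda>x. L (g x)) has_real_derivative L (g' 1)) (at t)"
proof -
  have 1: "((\<lambda>x. L (g x)) has_derivative (\<lambda>v. L (g' v))) (at t)"
    by (rule bounded_linear.has_derivative[OF L g])
  have bg: "bounded_linear g'" by (rule has_derivative_bounded_linear[OF g])
  have e: "L (g' v) = L (g' 1) * v" for v :: real
  proof -
    have "g' (v *\<^sub>R 1) = v *\<^sub>R g' 1"
      by (rule linear_scale[OF bounded_linear.linear[OF bg]])
    then have "g' v = v *\<^sub>R g' 1" by simp
    moreover have "L (v *\<^sub>R g' 1) = v *\<^sub>R L (g' 1)"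
      by (rule linear_scale[OF bounded_linear.linear[OF L]])
    ultimately show ?thesis by (simp add: mult.commute)
  qed
  have "(\<lambda>v. L (g' v)) = (*) (L (g' 1))" using e by (rule ext)
  then show ?thesis using 1 unfolding has_field_derivative_def by simp
qed
lemma J_curve:
  fixes L :: "'a::real_normed_vector \<Rightarrow> real"
  assumes sm: "smooth_on {-e<..<e} c" and L: "bounded_linear L"
  shows "\<exists>x1 x2. J e (\<lambda>t. L (c t)) (L (c 0)) x1 x2"
proof -
  let ?S = "{-e<..<e}"
  obtain D where D0: "\<forall>x\<in>?S. D [] x = c x"
    and DD: "\<forall>vs. \<forall>x\<in>?S. (D vs has_derivative (\<lambda>v. D (v # vs) x)) (at x within ?S)"
    using sm unfolding smooth_on_def by blast
  have DDa: "(D vs has_derivative (\<lambda>v. D (v # vs) x)) (at x)" if "x \<in> ?S" for vs x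
  proof -
    have "at x within ?S = at x" by (rule at_within_open[OF that open_greaterThanLessThan])
    then show ?thesis using DD that by metis
  qed
  have c1: "(c has_derivative (\<lambda>v. D [v] x)) (at x)" if "x \<in> ?S" for x
    by (rule has_derivative_transform_within_open[OF DDa[OF that] open_greaterThanLessThan that])
       (use D0 in auto)
  have "\<forall>t\<in>?S. ((\<lambda>t. L (c t)) has_real_derivative L (D [1] t)) (at t) \<and>
       ((\<lambda>t. L (D [1] t)) has_real_derivative L (D [1, 1] t)) (at t)"
    using real_deriv_L[OF c1 L] real_deriv_L[OF DDa L] by blast
  then have "J e (\<lambda>t. L (c t)) (L (c 0)) (L (D [1] 0)) (L (D [1, 1] 0))"
    unfolding J_def
    apply (rule_tac x="\<lambda>t. L (D [1] t)" in exI)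
    apply (rule_tac x="\<lambda>t. L (D [1, 1] t)" in exI)
    by simp
  then show ?thesis by blast
qed



lemma multi_idx_Suc:
  "multi_idx (Suc d) n = (\<lambda>(is, a). is @ [a]) ` (multi_idx d n \<times> {..<n d})"
proof
  show "multi_idx (Suc d) n \<subseteq> (\<lambda>(is, a). is @ [a]) ` (multi_idx d n \<times> {..<n d})"
  proof
    fix xs assume xs: "xs \<in> multi_idx (Suc d) n"
    then have len: "length xs = Suc d" and lt: "\<forall>j<Suc d. xs ! j < n j" by (auto simp: multi_idx_def)
    have xs_eq: "xs = butlast xs @ [last xs]" using len
      by (metis append_butlast_last_id list.size(3) nat.distinct(1))
    have lb: "length (butlast xs) = d" using len by simp
    have "butlast xs \<in> multi_idx d n"
      unfolding multi_idx_def using lt lb by (auto simp: nth_butlast)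
    moreover have "last xs = xs ! d" using len
      by (metis diff_Suc_1 last_conv_nth list.size(3) nat.distinct(1))
    then have "last xs < n d" using lt by simp
    ultimately show "xs \<in> (\<lambda>(is, a). is @ [a]) ` (multi_idx d n \<times> {..<n d})"
      using xs_eq by (intro image_eqI[of _ _ "(butlast xs, last xs)"]) auto
  qed
next
  show "(\<lambda>(is, a). is @ [a]) ` (multi_idx d n \<times> {..<n d}) \<subseteq> multi_idx (Suc d) n"
    unfolding multi_idx_def by (auto simp: nth_append less_Suc_eq)
qed

lemma sum_multi_idx:
  fixes F :: "nat \<Rightarrow> nat \<Rightarrow> real"
  shows "(\<Sum>is\<in>multi_idx d n. \<Prod>j<d. F j (is ! j)) = (\<Prod>j<d. \<Sum>a<n j. F j a)"
proof (induction d)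
  case 0
  have "multi_idx 0 n = {[]}" by (auto simp: multi_idx_def)
  then show ?case by simp
next
  case (Suc d)
  have inj: "inj_on (\<lambda>(is, a). is @ [a]) (multi_idx d n \<times> {..<n d})"
    by (auto simp: inj_on_def)
  have "(\<Sum>is\<in>multi_idx (Suc d) n. \<Prod>j<Suc d. F j (is ! j))
      = (\<Sum>p\<in>multi_idx d n \<times> {..<n d}. \<Prod>j<Suc d. F j ((fst p @ [snd p]) ! j))"
    unfolding multi_idx_Suc by (subst sum.reindex[OF inj]) (simp add: case_prod_beta)
  also have "\<dots> = (\<Sum>p\<in>multi_idx d n \<times> {..<n d}. (\<Prod>j<d. F j (fst p ! j)) * F d (snd p))"
  proof (rule sum.cong[OF refl])
    fix p assume p: "p \<in> multi_idx d n \<times> {..<n d}"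
    then have l: "length (fst p) = d" by (auto simp: multi_idx_def)
    have "(\<Prod>j<d. F j ((fst p @ [snd p]) ! j)) = (\<Prod>j<d. F j (fst p ! j))"
      by (rule prod.cong[OF refl]) (simp add: nth_append l)
    moreover have "(fst p @ [snd p]) ! d = snd p" using l by (metis nth_append_length)
    ultimately show "(\<Prod>j<Suc d. F j ((fst p @ [snd p]) ! j)) = (\<Prod>j<d. F j (fst p ! j)) * F d (snd p)"
      by simp
  qed
  also have "\<dots> = (\<Sum>xs\<in>multi_idx d n. \<Sum>a<n d. (\<Prod>j<d. F j (xs ! j)) * F d a)"
    unfolding sum.cartesian_product by (simp add: case_prod_beta)
  also have "\<dots> = (\<Sum>is\<in>multi_idx d n. \<Prod>j<d. F j (is ! j)) * (\<Sum>a<n d. F d a)"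
    by (simp add: sum_product)
  also have "\<dots> = (\<Prod>j<Suc d. \<Sum>a<n j. F j a)" using Suc.IH by simp
  finally show ?case .
qed

lemma fs_mk_tensor: "fs (mk_tensor d n F) is = (if is \<in> multi_idx d n then F is else 0)"
  by (simp add: mk_tensor.rep_eq)

lemma supp_mk_tensor: "supp_fs (mk_tensor d n F) \<subseteq> multi_idx d n"
  by (auto simp: supp_fs_def fs_mk_tensor split: if_splits)

lemma inner_outer_lift:
  "inner (outer d n u) (lift_phi d r n (l, Y')) =
     (\<Sum>i<r. fs l i * (\<Prod>j<d. \<Sum>a<n j. fs (u j) a * fs Y' (j, a, i)))"
proof -
  have "inner (outer d n u) (lift_phi d r n (l, Y')) =
      (\<Sum>is\<in>multi_idx d n. fs (outer d n u) is * fs (lift_phi d r n (l, Y')) is)"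
    unfolding outer_def by (rule inner_fsupp_sup[OF finite_multi_idx supp_mk_tensor])
  also have "\<dots> = (\<Sum>is\<in>multi_idx d n. (\<Prod>j<d. fs (u j) (is ! j)) *
        (\<Sum>i<r. fs l i * (\<Prod>j<d. fs Y' (j, is ! j, i))))"
    by (rule sum.cong[OF refl]) (simp add: outer_def lift_phi_def fs_mk_tensor)
  also have "\<dots> = (\<Sum>is\<in>multi_idx d n. \<Sum>i<r. fs l i * (\<Prod>j<d. fs (u j) (is ! j) * fs Y' (j, is ! j, i)))"
    by (rule sum.cong[OF refl]) (simp add: sum_distrib_left prod.distrib algebra_simps)
  also have "\<dots> = (\<Sum>i<r. fs l i * (\<Sum>is\<in>multi_idx d n. \<Prod>j<d. fs (u j) (is ! j) * fs Y' (j, is ! j, i)))"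
    by (subst sum.swap) (simp add: sum_distrib_left)
  also have "\<dots> = (\<Sum>i<r. fs l i * (\<Prod>j<d. \<Sum>a<n j. fs (u j) a * fs Y' (j, a, i)))"
    by (simp add: sum_multi_idx[where F="\<lambda>j a. fs (u j) a * fs Y' (j, a, _)"])
  finally show ?thesis .
qed

lemma supp_add: "supp_fs (x + y) \<subseteq> supp_fs x \<union> supp_fs y"
  by (auto simp: supp_fs_def fs_add)

lemma supp_scale: "supp_fs (c *\<^sub>R x) \<subseteq> supp_fs x"
  by (auto simp: supp_fs_def fs_scale)

lemma subspace_tensor_space: "subspace (tensor_space d n)"
  unfolding subspace_def tensor_space_def
proof (intro conjI ballI allI)
  show "0 \<in> {X. supp_fs X \<subseteq> multi_idx d n}" by (simp add: supp_fs_def fs_zero)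
  fix x y assume "x \<in> {X. supp_fs X \<subseteq> multi_idx d n}" "y \<in> {X. supp_fs X \<subseteq> multi_idx d n}"
  then show "x + y \<in> {X. supp_fs X \<subseteq> multi_idx d n}" using supp_add[of x y] by auto
next
  fix c x assume "x \<in> {X. supp_fs X \<subseteq> multi_idx d n}"
  then show "c *\<^sub>R x \<in> {X. supp_fs X \<subseteq> multi_idx d n}" using supp_scale[of c x] by auto
qed

lemma outer_in_W: "outer d n u \<in> tensor_space d n"
  unfolding outer_def tensor_space_def by (rule CollectI, rule supp_mk_tensor)

lemma lift_in_W: "lift_phi d r n p \<in> tensor_space d n"
  unfolding lift_phi_def tensor_space_def by (auto simp: case_prod_beta intro: supp_mk_tensor[THEN subsetD])



lemma bl_b: "bounded_linear (\<lambda>p::param. fs (fst p) i)"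
proof -
  have "bounded_linear (\<lambda>v. \<Sum>k\<in>{i}. 1 * fs v (id k))" by (rule bl_fs_sum) simp
  from bounded_linear_compose[OF this bounded_linear_fst] show ?thesis by simp
qed

lemma bl_a: "bounded_linear (\<lambda>p::param. \<Sum>a<m. w a * fs (snd p) (j, a, i))"
proof -
  have "bounded_linear (\<lambda>v. \<Sum>a\<in>{..<m}. w a * fs v ((\<lambda>a. (j, a, i)) a))" by (rule bl_fs_sum) simp
  from bounded_linear_compose[OF this bounded_linear_snd] show ?thesis by simp
qed

lemma a_zero:
  assumes "v \<in> orth_compl (Rn m) (col_space r Y j)" "i < r"
  shows "(\<Sum>a<m. fs v a * fs Y (j, a, i)) = 0"
proof -
  have sv: "supp_fs v \<subseteq> {..<m}" using assms(1) by (simp add: orth_compl_def Rn_def)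
  have "inner v (column Y j i) = (\<Sum>a<m. fs v a * fs (column Y j i) a)"
    by (rule inner_fsupp_sup[OF finite_lessThan sv])
  also have "\<dots> = (\<Sum>a<m. fs v a * fs Y (j, a, i))" by (simp add: column.rep_eq)
  finally have eq: "inner v (column Y j i) = (\<Sum>a<m. fs v a * fs Y (j, a, i))" .
  have "column Y j i \<in> col_space r Y j"
    unfolding col_space_def using assms(2) by (intro span_base) blast
  then have "inner v (column Y j i) = 0" using assms(1) by (simp add: orth_compl_def)
  then show ?thesis using eq by simp
qed


lemma neg_compl:
  assumes "v \<in> orth_compl (Rn m) S"
  shows "- v \<in> orth_compl (Rn m) S"
proof -
  have "supp_fs (- v) = supp_fs v" by (simp add: supp_fs_def fs_uminus)
  then show ?thesis using assms by (simp add: orth_compl_def Rn_def)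
qed

lemma outer_neg:
  assumes "d \<ge> 1"
  shows "outer d n (u(0 := - u 0)) = - outer d n u"
proof (rule fs_eqI)
  fix xs
  have z: "0 \<in> {..<d}" using assms by simp
  have "(\<Prod>j<d. fs ((u(0 := - u 0)) j) (xs ! j)) = - (\<Prod>j<d. fs (u j) (xs ! j))"
  proof -
    have "(\<Prod>j<d. fs ((u(0 := - u 0)) j) (xs ! j)) =
        fs (- u 0) (xs ! 0) * (\<Prod>j\<in>{..<d} - {0}. fs ((u(0 := - u 0)) j) (xs ! j))"
      by (subst prod.remove[OF finite_lessThan z]) simp
    also have "(\<Prod>j\<in>{..<d} - {0}. fs ((u(0 := - u 0)) j) (xs ! j)) = (\<Prod>j\<in>{..<d} - {0}. fs (u j) (xs ! j))"
      by (rule prod.cong) auto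
    also have "(\<Prod>j<d. fs (u j) (xs ! j)) = fs (u 0) (xs ! 0) * (\<Prod>j\<in>{..<d} - {0}. fs (u j) (xs ! j))"
      by (subst prod.remove[OF finite_lessThan z]) simp
    ultimately show ?thesis by (simp add: fs_uminus)
  qed
  then show "fs (outer d n (u(0 := - u 0))) xs = fs (- outer d n u) xs"
    by (simp add: outer_def fs_mk_tensor fs_uminus)
qed

lemma choose_u:
  assumes d: "d \<ge> 1"
    and ns: "\<not> tensor_of_complements d r n Y \<subseteq> dual_cone (tensor_space d n) K"
  shows "\<exists>u. (\<forall>j<d. u j \<in> orth_compl (Rn (n j)) (col_space r Y j)) \<and>
      outer d n u \<notin> dual_cone (tensor_space d n) K"
proof (rule ccontr)
  assume "\<not> ?thesis"
  then have H: "\<And>u. (\<forall>j<d. u j \<in> orth_compl (Rn (n j)) (col_space r Y j)) \<Longrightarrow>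
      outer d n u \<in> dual_cone (tensor_space d n) K" by blast
  define S where "S = {outer d n u | u. \<forall>j<d. u j \<in> orth_compl (Rn (n j)) (col_space r Y j)}"
  have SW: "span S \<subseteq> tensor_space d n"
    by (rule span_minimal) (auto simp: S_def outer_in_W subspace_tensor_space)
  have S0: "span S \<subseteq> {x. inner x v = 0}" if v: "v \<in> K" for v
  proof (rule span_minimal)
    show "subspace {x. inner x v = 0}"
      unfolding subspace_def by (simp add: inner_add_left)
    show "S \<subseteq> {x. inner x v = 0}"
    proof
      fix s assume "s \<in> S"
      then obtain u where u: "\<forall>j<d. u j \<in> orth_compl (Rn (n j)) (col_space r Y j)"
        and s: "s = outer d n u" unfolding S_def by blast
      have u': "\<forall>j<d. (u(0 := - u 0)) j \<in> orth_compl (Rn (n j)) (col_space r Y j)"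
        using u d neg_compl by auto
      have "inner s v \<ge> 0" using H[OF u] v s by (simp add: dual_cone_def)
      moreover have "inner (- s) v \<ge> 0" using H[OF u'] v s unfolding outer_neg[OF d]
        by (simp add: dual_cone_def)
      ultimately show "s \<in> {x. inner x v = 0}" by simp
    qed
  qed
  have "tensor_of_complements d r n Y \<subseteq> dual_cone (tensor_space d n) K"
  proof
    fix x assume "x \<in> tensor_of_complements d r n Y"
    then have x: "x \<in> span S" by (simp add: tensor_of_complements_def S_def)
    show "x \<in> dual_cone (tensor_space d n) K"
      unfolding dual_cone_def using x SW S0 by force
  qed
  then show False using ns by blast
qed


lemma tw_inner: "twice_differentiable_on W (inner (G::'a::real_inner))"
  unfolding twice_differentiable_on_def
proof (intro exI[of _ "\<lambda>x. inner G"] exI[of _ "\<lambda>x v. \<lambda>w. 0"] ballI conjI allI)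
  fix x show "(inner G has_derivative inner G) (at x within W)"
    by (rule bounded_linear_imp_has_derivative[OF bounded_linear_inner_right])
  fix v show "((\<lambda>y. inner G v) has_derivative (\<lambda>w. 0)) (at x within W)"
    by (rule has_derivative_const)
qed

lemma grad_unique:
  fixes G g X :: "'a::real_inner"
  assumes W: "subspace W" and XW: "X \<in> W" and gW: "g \<in> W" and GW: "G \<in> W"
    and hd: "(inner G has_derivative inner g) (at X within W)"
  shows "g = G"
proof -
  define e where "e = g - G"
  have eW: "e \<in> W" unfolding e_def using W gW GW by (rule subspace_diff)
  define \<gamma> where "\<gamma> = (\<lambda>s::real. X + s *\<^sub>R e)"
  have g1: "(\<gamma> has_derivative (\<lambda>s. s *\<^sub>R e)) (at 0 within UNIV)"
    unfolding \<gamma>_def by (auto intro!: derivative_eq_intros)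
  have img: "\<gamma> ` UNIV \<subseteq> W"
    unfolding \<gamma>_def using W XW eW by (auto intro: subspace_add subspace_scale)
  have g0: "\<gamma> 0 = X" by (simp add: \<gamma>_def)
  have hd': "(inner G has_derivative inner g) (at (\<gamma> 0) within \<gamma> ` UNIV)"
    using has_derivative_subset[OF hd img] g0 by simp
  have hG: "(inner G has_derivative inner G) (at (\<gamma> 0) within \<gamma> ` UNIV)"
    by (rule bounded_linear_imp_has_derivative[OF bounded_linear_inner_right])
  have c1: "((inner G \<circ> \<gamma>) has_derivative (inner g \<circ> (\<lambda>s. s *\<^sub>R e))) (at 0)"
    using diff_chain_within[OF g1 hd'] by simp
  have c2: "((inner G \<circ> \<gamma>) has_derivative (inner G \<circ> (\<lambda>s. s *\<^sub>R e))) (at 0)"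
    using diff_chain_within[OF g1 hG] by simp
  have "(inner g \<circ> (\<lambda>s. s *\<^sub>R e)) = (inner G \<circ> (\<lambda>s. s *\<^sub>R e))"
    by (rule has_derivative_unique[OF c1 c2])
  then have "inner g e = inner G e" by (metis comp_apply scaleR_one)
  then have "inner e e = 0" unfolding e_def by (simp add: inner_diff_left)
  then show ?thesis unfolding e_def by simp
qed


lemma crit:
  assumes u: "\<forall>j<d. u j \<in> orth_compl (Rn (n j)) (col_space r Y j)"
    and H: "d \<ge> 3 \<or> (d = 2 \<and> lam = 0)"
  shows "two_critical M (inner (outer d n u) \<circ> lift_phi d r n) (lam, Y)"
  unfolding two_critical_def
proof (intro allI impI)
  fix c assume "smooth_curve_in M c \<and> c 0 = (lam, Y)"
  then obtain e where e: "e > 0" and sm: "smooth_on {-e<..<e} c" and c0: "c 0 = (lam, Y)"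
    unfolding smooth_curve_in_def by blast
  define b where "b = (\<lambda>i t. fs (fst (c t)) i)"
  define a where "a = (\<lambda>i j t. \<Sum>a<n j. fs (u j) a * fs (snd (c t)) (j, a, i))"
  have eqh: "(inner (outer d n u) \<circ> lift_phi d r n) \<circ> c = (\<lambda>t. \<Sum>i<r. b i t * (\<Prod>j<d. a i j t))"
  proof
    fix t
    have "c t = (fst (c t), snd (c t))" by simp
    then show "((inner (outer d n u) \<circ> lift_phi d r n) \<circ> c) t = (\<Sum>i<r. b i t * (\<Prod>j<d. a i j t))"
      unfolding b_def a_def using inner_outer_lift[of d n u r "fst (c t)" "snd (c t)"]
      by (simp del: prod.collapse)
  qed
  have Jb: "\<exists>x1 x2. J e (b i) (fs lam i) x1 x2" for i
    using J_curve[OF sm bl_b[of i]] c0 unfolding b_def by simp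
  have Ja: "\<exists>x1 x2. J e (a i j) 0 x1 x2" if "i < r" "j < d" for i j
  proof -
    have "\<exists>x1 x2. J e (a i j) (\<Sum>a<n j. fs (u j) a * fs Y (j, a, i)) x1 x2"
      using J_curve[OF sm bl_a[where m="n j" and w="fs (u j)" and j=j and i=i]] c0 unfolding a_def by simp
    moreover have "(\<Sum>a<n j. fs (u j) a * fs Y (j, a, i)) = 0"
      using a_zero[of "u j" "n j" r Y j i] u that by blast
    ultimately show ?thesis by simp
  qed
  have Ji: "J e (\<lambda>t. b i t * (\<Prod>j<d. a i j t)) 0 0 0" if i: "i < r" for i
  proof -
    obtain x0 x1 x2 where X: "J e (\<lambda>t. \<Prod>j<d. a i j t) x0 x1 x2" "(d \<ge> 1 \<longrightarrow> x0 = 0)"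
     "(d \<ge> 2 \<longrightarrow> x1 = 0)" "(d \<ge> 3 \<longrightarrow> x2 = 0)"
      using J_prod[of d e "a i"] Ja[OF i] by blast
    obtain y1 y2 where Yb: "J e (b i) (fs lam i) y1 y2" using Jb by blast
    have "J e (\<lambda>t. b i t * (\<Prod>j<d. a i j t)) (fs lam i * x0) (y1 * x0 + fs lam i * x1)
        (y2 * x0 + 2 * y1 * x1 + fs lam i * x2)"
      using J_mult[OF Yb X(1)] .
    moreover have "fs lam i * x0 = 0" "y1 * x0 + fs lam i * x1 = 0"
        "y2 * x0 + 2 * y1 * x1 + fs lam i * x2 = 0"
      using H X(2-4) by (auto simp: fs_zero)
    ultimately show ?thesis by simp
  qed
  have "J e ((inner (outer d n u) \<circ> lift_phi d r n) \<circ> c) 0 0 0"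
    unfolding eqh by (rule J_sum) (use Ji in auto)
  from J_deriv[OF this e] show "deriv (inner (outer d n u) \<circ> lift_phi d r n \<circ> c) 0 = 0 \<and>
        0 \<le> deriv (deriv (inner (outer d n u) \<circ> lift_phi d r n \<circ> c)) 0" by simp
qed


theorem proposition5p2:
  fixes d r :: nat and n :: "nat \<Rightarrow> nat" and M :: "param set"
    and lam :: "nat fsupp" and Y :: "(nat \<times> nat \<times> nat) fsupp"
  assumes "embedded_submanifold (param_space d r n) M"
    and "(lam, Y) \<in> M"
    and "\<not> tensor_of_complements d r n Y \<subseteq>
           dual_cone (tensor_space d n)
             (tangent_cone (lift_phi d r n ` M) (lift_phi d r n (lam, Y)))"
  shows "(d \<ge> 3 \<longrightarrow> \<not> two_implies_one M (lift_phi d r n) (tensor_space d n) (lam, Y)) \<and>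
         (d = 2 \<and> lam = 0 \<longrightarrow> \<not> two_implies_one M (lift_phi d r n) (tensor_space d n) (lam, Y))"
proof -
  have main: "\<not> two_implies_one M (lift_phi d r n) (tensor_space d n) (lam, Y)"
    if H: "d \<ge> 3 \<or> (d = 2 \<and> lam = 0)"
  proof
    assume T: "two_implies_one M (lift_phi d r n) (tensor_space d n) (lam, Y)"
    have d1: "d \<ge> 1" using H by auto
    obtain u where u: "\<forall>j<d. u j \<in> orth_compl (Rn (n j)) (col_space r Y j)"
      and nd: "outer d n u \<notin> dual_cone (tensor_space d n)
             (tangent_cone (lift_phi d r n ` M) (lift_phi d r n (lam, Y)))"
      using choose_u[OF d1 assms(3)] by blast
    have "stationary_point (tensor_space d n) (lift_phi d r n ` M) (inner (outer d n u))
        (lift_phi d r n (lam, Y))"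
      using T tw_inner crit[OF u H, of M] unfolding two_implies_one_def by blast
    then obtain g where gW: "g \<in> tensor_space d n"
      and hd: "(inner (outer d n u) has_derivative inner g) (at (lift_phi d r n (lam, Y)) within tensor_space d n)"
      and gd: "g \<in> dual_cone (tensor_space d n)
             (tangent_cone (lift_phi d r n ` M) (lift_phi d r n (lam, Y)))"
      unfolding stationary_point_def by blast
    have "g = outer d n u"
      by (rule grad_unique[OF subspace_tensor_space lift_in_W gW outer_in_W hd])
    then show False using gd nd by simp
  qed
  show ?thesis using main by auto
qed

end
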